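(* Let $k\ge 2$, $n = 2k+1$, and let $A=(a_{ij})$ be an $n\times n$ matrix of the following form: $a_{i+1,i}=s$ for $1\le i\le n-1$ and $a_{ij}=0$ for $i>j+1$; $a_{1j}=t$ for $1\le j\le k$, $a_{1j}=0$ for $k+1\le j\le 2k$, $a_{1n}=t$; for $2\le i\le k+1$: $a_{ij}=t$ for $k+1\le j\le 2k$ and $a_{in}=0$; for $k+2\le i\le n$: $a_{in}=t$; and the remaining ("free") entries $a_{ij}$ with $2\le i\le j\le k$ or $k+2\le i\le j\le 2k$ each lie in $\{0,t\}$. If at least one free entry equals $t$, then, viewing $\det A$ as a polynomial in the indeterminates $s$ and $t$, the coefficient of the monomial $s^{n-4}t^4$ in $\det A$ is nonzero.
   Context: Every entry of $A$ is $0$, $s$ or $t$, so $\det A$ is a polynomial in $s,t$ with integer coefficients. *)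

theory Defs
  imports "Jordan_Normal_Form.Determinant" "HOL-Computational_Algebra.Polynomial"
begin

text \<open>Bivariate integer polynomials in s and t are represented as int poly poly:
  the outer variable is t, the inner variable (coefficients) is s.\<close>

definition var_s :: "int poly poly" where
  "var_s = [:[:0, 1:]:]"

definition var_t :: "int poly poly" where
  "var_t = [:0, 1:]"

definition coeff_st :: "int poly poly \<Rightarrow> nat \<Rightarrow> nat \<Rightarrow> int" where
  "coeff_st p a b = coeff (coeff p b) a"

definition ent :: "'a mat \<Rightarrow> nat \<Rightarrow> nat \<Rightarrow> 'a" where
  "ent A i j = A $$ (i - 1, j - 1)"

end

theory Submission imports Defs begin
definition Gm :: "(nat \<Rightarrow> nat \<Rightarrow> int poly poly) \<Rightarrow> nat \<Rightarrow> (nat \<Rightarrow> int poly poly) \<Rightarrow> int poly poly mat" where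
  "Gm f m v = mat m m (\<lambda>(i,j). if j = m - 1 then v i else f i j)"

definition Dm :: "(nat \<Rightarrow> nat \<Rightarrow> int poly poly) \<Rightarrow> nat \<Rightarrow> int poly poly mat" where
  "Dm f m = mat m m (\<lambda>(i,j). f i j)"

lemma G_rec:
  assumes s: "f (Suc p) p = var_s" and z: "\<forall>j<p. f (Suc p) j = 0"
  shows "det (Gm f (Suc (Suc p)) v) = v (Suc p) * det (Dm f (Suc p)) - var_s * det (Gm f (Suc p) v)"
proof -
  let ?G = "Gm f (Suc (Suc p)) v"
  have car: "?G \<in> carrier_mat (Suc (Suc p)) (Suc (Suc p))" unfolding Gm_def by auto
  have "det ?G = (\<Sum>j<Suc (Suc p). ?G $$ (Suc p, j) * cofactor ?G (Suc p) j)"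
    by (rule laplace_expansion_row[OF car], simp)
  also have "\<dots> = (\<Sum>j<p. ?G $$ (Suc p, j) * cofactor ?G (Suc p) j) + ?G $$ (Suc p, p) * cofactor ?G (Suc p) p
     + ?G $$ (Suc p, Suc p) * cofactor ?G (Suc p) (Suc p)" by simp
  also have "(\<Sum>j<p. ?G $$ (Suc p, j) * cofactor ?G (Suc p) j) = 0"
    using z by (auto simp: Gm_def intro!: sum.neutral)
  also have "?G $$ (Suc p, p) = var_s" using s by (simp add: Gm_def)
  also have "?G $$ (Suc p, Suc p) = v (Suc p)" by (simp add: Gm_def)
  finally have e: "det ?G = var_s * cofactor ?G (Suc p) p + v (Suc p) * cofactor ?G (Suc p) (Suc p)" by simp
  have d1: "mat_delete ?G (Suc p) (Suc p) = Dm f (Suc p)"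
    by (rule eq_matI, auto simp: mat_delete_def Gm_def Dm_def)
  have d2: "mat_delete ?G (Suc p) p = Gm f (Suc p) v"
    by (rule eq_matI, auto simp: mat_delete_def Gm_def Dm_def)
  show ?thesis unfolding e cofactor_def d1 d2 by simp
qed

lemma coeff_st_add[simp]: "coeff_st (p + q) x y = coeff_st p x y + coeff_st q x y"
  by (simp add: coeff_st_def)
lemma coeff_st_diff[simp]: "coeff_st (p - q) x y = coeff_st p x y - coeff_st q x y"
  by (simp add: coeff_st_def)
lemma coeff_st_0[simp]: "coeff_st 0 x y = 0"
  by (simp add: coeff_st_def)
lemma coeff_st_1: "coeff_st 1 x y = (if x = 0 \<and> y = 0 then 1 else 0)"
  by (simp add: coeff_st_def coeff_1)
lemma coeff_st_s: "coeff_st (var_s * p) x y = (if x = 0 then 0 else coeff_st p (x - 1) y)"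
proof -
  have "var_s * p = smult [:0,1:] p" by (simp add: var_s_def)
  moreover have "coeff ([:0,1:] * q) x = (if x = 0 then 0 else coeff q (x - 1))" for q :: "int poly"
    by (cases x) (auto simp: coeff_pCons)
  ultimately show ?thesis by (simp add: coeff_st_def)
qed
lemma coeff_st_t: "coeff_st (var_t * p) x y = (if y = 0 then 0 else coeff_st p x (y - 1))"
proof -
  have "var_t * p = pCons 0 p" by (simp add: var_t_def)
  then show ?thesis by (cases y) (auto simp: coeff_st_def)
qed

lemma det_0x0: "det (mat 0 0 g) = (1::'a::comm_ring_1)"
proof -
  have "mat 0 0 g = (1\<^sub>m 0 :: 'a mat)" by (rule eq_matI) auto
  then show ?thesis by simp
qed

lemma det_1x1: "det (mat 1 1 g) = (g (0,0)::'a::comm_ring_1)"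
proof -
  have car: "mat 1 1 g \<in> carrier_mat 1 1" by auto
  have "det (mat 1 1 g) = (\<Sum>j<1. mat 1 1 g $$ (0, j) * cofactor (mat 1 1 g) 0 j)"
    by (rule laplace_expansion_row[OF car], simp)
  moreover have "mat_delete (mat 1 1 g) 0 0 = mat 0 0 (\<lambda>_. 0)" by (rule eq_matI) auto
  then have "cofactor (mat 1 1 g) 0 0 = 1" by (simp add: cofactor_def det_0x0)
  ultimately show ?thesis by simp
qed

lemma G1: "det (Gm f (Suc 0) v) = v 0"
proof -
  have "Gm f (Suc 0) v = mat 1 1 (\<lambda>(i,j). v i)" unfolding Gm_def by (rule eq_matI) auto
  then show ?thesis using det_1x1[of "\<lambda>(i,j). v i"] by simp
qed
lemma D0: "det (Dm f 0) = 1" unfolding Dm_def by (simp add: det_0x0)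
lemma DG: "m \<ge> 1 \<Longrightarrow> Dm f m = Gm f m (\<lambda>i. f i (m - 1))"
  unfolding Dm_def Gm_def by (rule eq_matI) auto

locale hess =
  fixes f :: "nat \<Rightarrow> nat \<Rightarrow> int poly poly" and N :: nat
  assumes H1: "\<And>i. Suc i < N \<Longrightarrow> f (Suc i) i = var_s"
    and H2: "\<And>i j. Suc j < i \<Longrightarrow> i < N \<Longrightarrow> f i j = 0"
    and H3: "\<And>i j. i \<le> j \<Longrightarrow> j < N \<Longrightarrow> f i j \<in> {0, var_t}"
begin

lemma rec: "Suc (Suc p) \<le> N \<Longrightarrow> det (Gm f (Suc (Suc p)) v) = v (Suc p) * det (Dm f (Suc p)) - var_s * det (Gm f (Suc p) v)"
  by (rule G_rec) (auto intro: H1 H2)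

lemma L1: "m \<le> N \<Longrightarrow> (\<forall>x y. 0 \<le> (-1::int)^x * coeff_st (det (Dm f m)) x y) \<and>
   (m \<ge> 1 \<longrightarrow> (\<forall>v. (\<forall>i<m. v i \<in> {0, var_t}) \<longrightarrow> (\<forall>x y. 0 \<le> (-1::int)^x * coeff_st (det (Gm f m v)) x y)))"
proof (induction m)
  case 0
  then show ?case by (simp add: D0 coeff_st_1)
next
  case (Suc m)
  have G: "0 \<le> (-1::int)^x * coeff_st (det (Gm f (Suc m) v)) x y" if v: "\<forall>i<Suc m. v i \<in> {0, var_t}" for v x y
  proof (cases m)
    case 0
    then show ?thesis using v by (auto simp: G1 var_t_def coeff_st_def coeff_pCons split: nat.splits)
  next
    case (Suc p)
    have IH: "0 \<le> (-1::int)^x * coeff_st (det (Dm f m)) x y"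
      "\<And>x y. 0 \<le> (-1::int)^x * coeff_st (det (Gm f m v)) x y" for x y
      using Suc.IH Suc.prems v \<open>m = Suc p\<close> by auto
    have e: "det (Gm f (Suc m) v) = v m * det (Dm f m) - var_s * det (Gm f m v)"
      using rec[of p v] Suc.prems \<open>m = Suc p\<close> by simp
    have a: "0 \<le> (-1::int)^x * coeff_st (v m * det (Dm f m)) x y"
      using v[rule_format, of m] IH(1)[of x "y - 1"] by (auto simp: coeff_st_t)
    have b: "0 \<le> (-1::int)^x * (- coeff_st (var_s * det (Gm f m v)) x y)"
    proof (cases x)
      case (Suc x') then show ?thesis using IH(2)[of x' y] by (simp add: coeff_st_s)
    qed (simp add: coeff_st_s)
    show ?thesis unfolding e using a b by (simp add: algebra_simps)
  qed
  show ?case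
  proof (intro conjI allI impI)
    fix x y
    have "\<forall>i<Suc m. f i m \<in> {0, var_t}" using H3 Suc.prems by auto
    from G[OF this] show "0 \<le> (-1::int)^x * coeff_st (det (Dm f (Suc m))) x y"
      using DG[of "Suc m" f] by simp
  qed (use G in auto)
qed

lemma L1D: "m \<le> N \<Longrightarrow> 0 \<le> (-1::int)^x * coeff_st (det (Dm f m)) x y"
  using L1 by blast
lemma L1G: "m \<le> N \<Longrightarrow> 1 \<le> m \<Longrightarrow> \<forall>i<m. v i \<in> {0, var_t} \<Longrightarrow> 0 \<le> (-1::int)^x * coeff_st (det (Gm f m v)) x y"
  using L1 by blast

lemma L2: "m \<le> N \<Longrightarrow> r < m \<Longrightarrow> \<forall>i<m. v i \<in> {0, var_t} \<Longrightarrow> v r = var_t \<Longrightarrow> m - 1 - r \<le> x \<Longrightarrow> 1 \<le> y \<Longrightarrow>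
   (-1::int)^(x - (m - 1 - r)) * coeff_st (det (Dm f r)) (x - (m - 1 - r)) (y - 1)
    \<le> (-1::int)^x * coeff_st (det (Gm f m v)) x y"
proof (induction m arbitrary: x)
  case 0
  then show ?case by simp
next
  case (Suc q)
  show ?case
  proof (cases q)
    case 0
    then have "r = 0" using Suc.prems by simp
    then show ?thesis using Suc.prems \<open>q = 0\<close>
      by (auto simp: G1 D0 coeff_st_1 var_t_def coeff_st_def coeff_pCons split: nat.splits)
  next
    case (Suc p)
    have e: "det (Gm f (Suc q) v) = v q * det (Dm f q) - var_s * det (Gm f q v)"
      using rec[of p v] Suc.prems \<open>q = Suc p\<close> by simp
    have Gnn: "0 \<le> (-1::int)^x * coeff_st (det (Gm f q v)) x y" for x y
      using L1G[of q v] Suc.prems \<open>q = Suc p\<close> by auto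
    have Dnn: "0 \<le> (-1::int)^x * coeff_st (det (Dm f q)) x y" for x y
      using L1D[of q] Suc.prems by auto
    have b: "0 \<le> (-1::int)^x * (- coeff_st (var_s * det (Gm f q v)) x y)" for x
    proof (cases x)
      case (Suc x') then show ?thesis using Gnn[of x' y] by (simp add: coeff_st_s)
    qed (simp add: coeff_st_s)
    have a: "0 \<le> (-1::int)^x * coeff_st (v q * det (Dm f q)) x y"
      using Suc.prems(3)[rule_format, of q] Dnn[of x "y - 1"] by (auto simp: coeff_st_t)
    show ?thesis
    proof (cases "r = q")
      case True
      have "(-1::int)^x * coeff_st (v q * det (Dm f q)) x y = (-1::int)^x * coeff_st (det (Dm f q)) x (y - 1)"
        using True Suc.prems by (simp add: coeff_st_t)
      then show ?thesis unfolding e using b[of x] True Suc.prems by (simp add: algebra_simps)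
    next
      case False
      then have rq: "r < q" using Suc.prems by simp
      then obtain x' where x': "x = Suc x'" using Suc.prems by (cases x) auto
      have IH: "(-1::int)^(x' - (q - 1 - r)) * coeff_st (det (Dm f r)) (x' - (q - 1 - r)) (y - 1)
         \<le> (-1::int)^x' * coeff_st (det (Gm f q v)) x' y"
        using Suc.IH[of x'] Suc.prems rq x' by auto
      have xx: "x - (Suc q - 1 - r) = x' - (q - 1 - r)" using x' rq by simp
      have "(-1::int)^x * (- coeff_st (var_s * det (Gm f q v)) x y) = (-1::int)^x' * coeff_st (det (Gm f q v)) x' y"
        using x' by (simp add: coeff_st_s)
      then show ?thesis unfolding e xx using IH a by (simp add: algebra_simps)
    qed
  qed
qed

lemma L2D: "m \<le> N \<Longrightarrow> r < m \<Longrightarrow> f r (m - 1) = var_t \<Longrightarrow> m - 1 - r \<le> x \<Longrightarrow> 1 \<le> y \<Longrightarrow>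
   (-1::int)^(x - (m - 1 - r)) * coeff_st (det (Dm f r)) (x - (m - 1 - r)) (y - 1)
    \<le> (-1::int)^x * coeff_st (det (Dm f m)) x y"
  using L2[of m r "\<lambda>i. f i (m - 1)" x y] DG[of m f] H3 by auto

end
theorem proposition5p8:
  fixes k n :: nat and A :: "int poly poly mat"
  assumes k2: "k \<ge> 2"
    and n_def: "n = 2 * k + 1"
    and dim: "A \<in> carrier_mat n n"
    and subdiag: "\<forall>i. 1 \<le> i \<and> i \<le> n - 1 \<longrightarrow> ent A (i + 1) i = var_s"
    and lower: "\<forall>i j. 1 \<le> j \<and> j + 1 < i \<and> i \<le> n \<longrightarrow> ent A i j = 0"
    and row1a: "\<forall>j. 1 \<le> j \<and> j \<le> k \<longrightarrow> ent A 1 j = var_t"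
    and row1b: "\<forall>j. k + 1 \<le> j \<and> j \<le> 2 * k \<longrightarrow> ent A 1 j = 0"
    and row1c: "ent A 1 n = var_t"
    and top_t: "\<forall>i j. 2 \<le> i \<and> i \<le> k + 1 \<and> k + 1 \<le> j \<and> j \<le> 2 * k \<longrightarrow> ent A i j = var_t"
    and top_n: "\<forall>i. 2 \<le> i \<and> i \<le> k + 1 \<longrightarrow> ent A i n = 0"
    and bot_n: "\<forall>i. k + 2 \<le> i \<and> i \<le> n \<longrightarrow> ent A i n = var_t"
    and free: "\<forall>i j. ((2 \<le> i \<and> i \<le> j \<and> j \<le> k) \<or> (k + 2 \<le> i \<and> i \<le> j \<and> j \<le> 2 * k))
                 \<longrightarrow> ent A i j \<in> {0, var_t}"
    and some_t: "\<exists>i j. ((2 \<le> i \<and> i \<le> j \<and> j \<le> k) \<or> (k + 2 \<le> i \<and> i \<le> j \<and> j \<le> 2 * k))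
                 \<and> ent A i j = var_t"
  shows "coeff_st (det A) (n - 4) 4 \<noteq> 0"
proof -
  define f where "f = (\<lambda>i j. A $$ (i, j))"
  have fe: "f i j = ent A (Suc i) (Suc j)" for i j by (simp add: f_def ent_def)
  interpret hess f n
  proof
    fix i assume "Suc i < n"
    then show "f (Suc i) i = var_s" using subdiag[rule_format, of "Suc i"] by (simp add: fe)
  next
    fix i j assume "Suc j < i" "i < n"
    then have "1 \<le> Suc j \<and> Suc j + 1 < Suc i \<and> Suc i \<le> n" by simp
    then show "f i j = 0" using lower by (simp add: fe)
  next
    fix i j assume ij: "i \<le> j" "j < n"
    show "f i j \<in> {0, var_t}"
    proof -
      consider "i = 0" | "1 \<le> i \<and> i \<le> k" | "k + 1 \<le> i" by linarith
      then show ?thesis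
      proof cases
        case 1
        then show ?thesis using row1a[rule_format, of "Suc j"] row1b[rule_format, of "Suc j"] row1c ij n_def
          by (cases "Suc j \<le> k"; cases "Suc j = n"; auto simp: fe)
      next
        case 2
        then show ?thesis using top_t[rule_format, of "Suc i" "Suc j"] top_n[rule_format, of "Suc i"]
           free[rule_format, of "Suc i" "Suc j"] ij n_def
          by (cases "Suc j \<le> k"; cases "Suc j = n"; auto simp: fe)
      next
        case 3
        then show ?thesis using bot_n[rule_format, of "Suc i"]
           free[rule_format, of "Suc i" "Suc j"] ij n_def
          by (cases "Suc j = n"; auto simp: fe)
      qed
    qed
  qed
  have detA: "det A = det (Dm f n)"
  proof -
    have "A = Dm f n" unfolding Dm_def f_def using dim by (intro eq_matI) auto
    then show ?thesis by simp
  qed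
  have Q0: "(-1::int)^0 * coeff_st (det (Dm f 0)) 0 0 = 1" by (simp add: D0 coeff_st_1)
  have main: "1 \<le> (-1::int)^(n-4) * coeff_st (det (Dm f n)) (n - 4) 4"
  proof -
    from some_t obtain i j where ij: "(2 \<le> i \<and> i \<le> j \<and> j \<le> k) \<or> (k + 2 \<le> i \<and> i \<le> j \<and> j \<le> 2 * k)"
      and t: "ent A i j = var_t" by blast
    from ij show ?thesis
    proof
      assume c: "2 \<le> i \<and> i \<le> j \<and> j \<le> k"
      have s1: "(-1::int)^(k-2) * coeff_st (det (Dm f (k+1))) (k - 2) 3 \<le> (-1::int)^(n-4) * coeff_st (det (Dm f n)) (n - 4) 4"
      proof -
        have "f (k+1) (n-1) = var_t" using bot_n[rule_format, of "k+2"] n_def k2 by (simp add: fe)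
        moreover have "n - 4 - (n - 1 - (k+1)) = k - 2" "n - 1 - (k+1) \<le> n - 4" using n_def k2 by auto
        ultimately show ?thesis using L2D[of n "k+1" "n-4" 4] n_def k2 by simp
      qed
      have s2: "(-1::int)^(j-2) * coeff_st (det (Dm f j)) (j - 2) 2 \<le> (-1::int)^(k-2) * coeff_st (det (Dm f (k+1))) (k - 2) 3"
      proof -
        have "f j k = var_t" using top_t[rule_format, of "j+1" "k+1"] c by (simp add: fe)
        moreover have "k - 2 - (k + 1 - 1 - j) = j - 2" "k + 1 - 1 - j \<le> k - 2" using c by auto
        ultimately show ?thesis using L2D[of "k+1" j "k-2" 3] n_def c by simp
      qed
      have s3: "(-1::int)^(i-2) * coeff_st (det (Dm f (i-1))) (i - 2) 1 \<le> (-1::int)^(j-2) * coeff_st (det (Dm f j)) (j - 2) 2"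
      proof -
        have "f (i-1) (j-1) = var_t" using t c by (simp add: fe)
        moreover have "j - 2 - (j - 1 - (i-1)) = i - 2" "j - 1 - (i-1) \<le> j - 2" "i - 1 < j" using c by auto
        ultimately show ?thesis using L2D[of j "i-1" "j-2" 2] n_def c by simp
      qed
      have s4: "1 \<le> (-1::int)^(i-2) * coeff_st (det (Dm f (i-1))) (i - 2) 1"
      proof -
        have "1 \<le> i-1 \<and> i-1 \<le> k" using c by auto
        then have "ent A 1 (i-1) = var_t" using row1a by blast
        moreover have "Suc (i-1-1) = i - 1" using c by auto
        ultimately have "f 0 (i-1-1) = var_t" by (simp add: fe)
        moreover have "i - 2 - (i - 1 - 1 - 0) = 0" "i - 1 - 1 - 0 \<le> i - 2" "i - 1 \<le> n" "0 < i - 1" using c n_def by auto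
        ultimately show ?thesis using L2D[of "i-1" 0 "i-2" 1] n_def c Q0 by simp
      qed
      show ?thesis using s1 s2 s3 s4 by linarith
    next
      assume c: "k + 2 \<le> i \<and> i \<le> j \<and> j \<le> 2 * k"
      have s1: "(-1::int)^(j-3) * coeff_st (det (Dm f j)) (j - 3) 3 \<le> (-1::int)^(n-4) * coeff_st (det (Dm f n)) (n - 4) 4"
      proof -
        have "f j (n-1) = var_t" using bot_n[rule_format, of "j+1"] n_def c by (simp add: fe)
        moreover have "n - 4 - (n - 1 - j) = j - 3" "n - 1 - j \<le> n - 4" using n_def k2 c by auto
        ultimately show ?thesis using L2D[of n j "n-4" 4] n_def c by simp
      qed
      have s2: "(-1::int)^(i-3) * coeff_st (det (Dm f (i-1))) (i - 3) 2 \<le> (-1::int)^(j-3) * coeff_st (det (Dm f j)) (j - 3) 3"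
      proof -
        have "f (i-1) (j-1) = var_t" using t c by (simp add: fe)
        moreover have "j - 3 - (j - 1 - (i-1)) = i - 3" "j - 1 - (i-1) \<le> j - 3" "i - 1 < j" using c k2 by auto
        ultimately show ?thesis using L2D[of j "i-1" "j-3" 3] n_def c by simp
      qed
      have s3: "(-1::int)^0 * coeff_st (det (Dm f 1)) 0 1 \<le> (-1::int)^(i-3) * coeff_st (det (Dm f (i-1))) (i - 3) 2"
      proof -
        have "2 \<le> (2::nat) \<and> 2 \<le> k + 1 \<and> k + 1 \<le> i-1 \<and> i-1 \<le> 2 * k" using c k2 by auto
        then have "ent A 2 (i-1) = var_t" using top_t by blast
        moreover have "Suc (i-1-1) = i - 1" using c by auto
        ultimately have "f 1 (i-1-1) = var_t" by (simp add: fe numeral_2_eq_2)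
        moreover have "i - 3 - (i - 1 - 1 - 1) = 0" "i - 1 - 1 - 1 \<le> i - 3" "i - 1 \<le> n" "1 < i - 1" using c n_def k2 by auto
        ultimately show ?thesis using L2D[of "i-1" 1 "i-3" 2] n_def c k2 by simp
      qed
      have s4: "1 \<le> (-1::int)^0 * coeff_st (det (Dm f 1)) 0 1"
      proof -
        have "f 0 0 = var_t" using row1a[rule_format, of 1] k2 by (simp add: fe)
        then show ?thesis using L2D[of 1 0 0 1] n_def k2 Q0 by simp
      qed
      show ?thesis using s1 s2 s3 s4 by linarith
    qed
  qed
  show ?thesis
  proof
    assume "coeff_st (det A) (n - 4) 4 = 0"
    then show False using main detA by simp
  qed
qed

end
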